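(* For all distributions $\mu_1,\mu_2,\nu_2$ on $\mathbb{C}[x]$ one has $$\mu_1 \rhd_{\nu_2}\mu_2 = \mu_1 \,{}_{\delta_1}\!\boxtimes_{\nu_2}\mu_2 ,$$ where the left side is the left component of the multiplicative conditionally monotone convolution and the right side is the left component of the multiplicative conditionally free convolution $(\mu_1,\delta_1)\boxtimes_c(\mu_2,\nu_2)$.
   Context: A distribution is a unital linear functional on $\mathbb{C}[x]$. An algebraic probability space $(\mathcal{A},\varphi,\psi)$ is a unital complex algebra with two unital linear functionals. For $X\in\mathcal{A}$ let $\mu_X(x^n)=\varphi(X^n)$ and $\nu_X(x^n)=\psi(X^n)$. The distribution $\delta_1$ is given by $\delta_1(x^n)=1$ for all $n\ge 0$. Conditionally monotone (c-monotone) independence. Let $I$ be a linearly ordered set and let $\{\mathcal{A}_i\}_{i\in I}$ be subalgebras of $\mathcal{A}$, none containing the unit. They are c-monotone independent if for all $n\ge1$, indices $i_1,\dots,i_n$ and $X_k\in\mathcal{A}_{i_k}$: (1) $\varphi(X_1\cdots X_n)=\varphi(X_1)\varphi(X_2\cdots X_n)$ whenever $i_1>i_2$; (2) $\varphi(X_1\cdots X_n)=\varphi(X_1\cdots X_{n-1})\varphi(X_n)$ whenever $i_n>i_{n-1}$; (3) $\varphi(X_1\cdots X_n)=(\varphi(X_j)-\psi(X_j))\varphi(X_1\cdots X_{j-1})\varphi(X_{j+1}\cdots X_n)+\psi(X_j)\varphi(X_1\cdots X_{j-1}X_{j+1}\cdots X_n)$ whenever $2\le j\le n-1$ and $i_{j-1}<i_j>i_{j+1}$;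 (4) conditions (1)–(3) also hold with $\varphi$ replaced by $\psi$ everywhere (monotone independence with respect to $\psi$). Elements are c-monotone independent if the non-unital subalgebras they generate are. Multiplicative c-monotone convolution: if $X,Y\in\mathcal{A}$ are such that $X-1$ and $Y$ are c-monotone independent (the algebra of $X-1$ preceding that of $Y$), the pair $(\mu_{XY},\nu_{XY})$ is denoted $(\mu_X,\nu_X)\rhd_c(\mu_Y,\nu_Y)$. Its left component depends only on $\mu_X,\mu_Y,\nu_Y$ and is denoted $\mu_X\rhd_{\nu_Y}\mu_Y$. Its right component is the multiplicative monotone convolution $\nu_X\rhd\nu_Y$. The convolution is defined for arbitrary distributions by realizing them in such a space. Conditionally free (c-free) independence: subalgebras $\{\mathcal{A}_i\}$ of $(\mathcal{A},\varphi,\psi)$ are c-free if they are freely independent with respect to $\psi$ and $\varphi(X_1\cdots X_n)=\prod_k\varphi(X_k)$ whenever $X_k\in\mathcal{A}_{i_k}$, $i_1\ne i_2\ne\cdots\ne i_n$ and $\psi(X_k)=0$ for all $k$. If $X,Y$ are c-free, $(\mu_{XY},\nu_{XY})$ depends only on $(\mu_X,\nu_X)$ and $(\mu_Y,\nu_Y)$. It is denoted $(\mu_X,\nu_X)\boxtimes_c(\mu_Y,\nu_Y)=(\mu_X\,{}_{\nu_X}\!\boxtimes_{\nu_Y}\mu_Y,\ \nu_X\boxtimes\nu_Y)$. *)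

theory Defs
  imports Complex_Main "HOL-Computational_Algebra.Polynomial"
begin

definition distribution :: "(complex poly \<Rightarrow> complex) \<Rightarrow> bool" where
  "distribution \<mu> \<longleftrightarrow>
     (\<forall>p q. \<mu> (p + q) = \<mu> p + \<mu> q) \<and> (\<forall>a p. \<mu> (smult a p) = a * \<mu> p) \<and> \<mu> 1 = 1"

definition delta1 :: "complex poly \<Rightarrow> complex" where
  "delta1 p = poly p 1"

text \<open>A unital complex algebra is a ring_1 type 'a together with a central unital ring
  embedding e of the scalars (scalar multiplication a.x = e a * x).\<close>
definition complex_alg :: "(complex \<Rightarrow> 'a::ring_1) \<Rightarrow> bool" where
  "complex_alg e \<longleftrightarrow> e 1 = 1 \<and> (\<forall>a b. e (a + b) = e a + e b) \<and> (\<forall>a b. e (a * b) = e a * e b)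
     \<and> (\<forall>a x. e a * x = x * e a)"

definition unital_functional :: "(complex \<Rightarrow> 'a::ring_1) \<Rightarrow> ('a \<Rightarrow> complex) \<Rightarrow> bool" where
  "unital_functional e \<phi> \<longleftrightarrow>
     (\<forall>x y. \<phi> (x + y) = \<phi> x + \<phi> y) \<and> (\<forall>a x. \<phi> (e a * x) = a * \<phi> x) \<and> \<phi> 1 = 1"

definition alg_prob_space :: "(complex \<Rightarrow> 'a::ring_1) \<Rightarrow> ('a \<Rightarrow> complex) \<Rightarrow> ('a \<Rightarrow> complex) \<Rightarrow> bool" where
  "alg_prob_space e \<phi> \<psi> \<longleftrightarrow> complex_alg e \<and> unital_functional e \<phi> \<and> unital_functional e \<psi>"

definition peval :: "(complex \<Rightarrow> 'a::ring_1) \<Rightarrow> complex poly \<Rightarrow> 'a \<Rightarrow> 'a" where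
  "peval e p Z = (\<Sum>i\<le>degree p. e (coeff p i) * Z ^ i)"

definition law :: "(complex \<Rightarrow> 'a::ring_1) \<Rightarrow> ('a \<Rightarrow> complex) \<Rightarrow> 'a \<Rightarrow> complex poly \<Rightarrow> complex" where
  "law e \<phi> Z = (\<lambda>p. \<phi> (peval e p Z))"

definition ngen :: "(complex \<Rightarrow> 'a::ring_1) \<Rightarrow> 'a \<Rightarrow> 'a set" where
  "ngen e Z = {peval e p Z | p. coeff p 0 = 0}"

definition ugen :: "(complex \<Rightarrow> 'a::ring_1) \<Rightarrow> 'a \<Rightarrow> 'a set" where
  "ugen e Z = {peval e p Z | p. True}"

definition subalgebra :: "(complex \<Rightarrow> 'a::ring_1) \<Rightarrow> 'a set \<Rightarrow> bool" where
  "subalgebra e A \<longleftrightarrow> 0 \<in> A \<and> (\<forall>x\<in>A. \<forall>y\<in>A. x + y \<in> A \<and> x * y \<in> A)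
     \<and> (\<forall>a. \<forall>x\<in>A. e a * x \<in> A)"

definition valid_word :: "'i set \<Rightarrow> ('i \<Rightarrow> 'a set) \<Rightarrow> ('i \<times> 'a) list \<Rightarrow> bool" where
  "valid_word I A ws \<longleftrightarrow> (\<forall>w\<in>set ws. fst w \<in> I \<and> snd w \<in> A (fst w))"

definition wprod :: "('i \<times> 'a::monoid_mult) list \<Rightarrow> 'a" where
  "wprod ws = prod_list (map snd ws)"

text \<open>Conditions (1)-(3) for the functional f, with g the functional appearing in (3)
  (indices 0-based: the paper's j with 2 <= j <= n-1 is j+1 here with 1 <= j <= n-2).\<close>
definition mono_conditions ::
  "'i::linorder set \<Rightarrow> ('i \<Rightarrow> 'a::ring_1 set) \<Rightarrow> ('a \<Rightarrow> complex) \<Rightarrow> ('a \<Rightarrow> complex) \<Rightarrow> bool" where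
  "mono_conditions I A f g \<longleftrightarrow>
    (\<forall>ws. valid_word I A ws \<and> ws \<noteq> [] \<longrightarrow>
      (let n = length ws in
       (2 \<le> n \<and> fst (ws ! 0) > fst (ws ! 1) \<longrightarrow>
          f (wprod ws) = f (snd (ws ! 0)) * f (wprod (tl ws))) \<and>
       (2 \<le> n \<and> fst (ws ! (n - 1)) > fst (ws ! (n - 2)) \<longrightarrow>
          f (wprod ws) = f (wprod (butlast ws)) * f (snd (ws ! (n - 1)))) \<and>
       (\<forall>j. 1 \<le> j \<and> j + 1 < n \<and> fst (ws ! (j - 1)) < fst (ws ! j) \<and> fst (ws ! j) > fst (ws ! (j + 1)) \<longrightarrow>
          f (wprod ws) =
            (f (snd (ws ! j)) - g (snd (ws ! j))) * f (wprod (take j ws)) * f (wprod (drop (j + 1) ws))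
            + g (snd (ws ! j)) * f (wprod (take j ws @ drop (j + 1) ws)))))"

definition cmono_indep ::
  "(complex \<Rightarrow> 'a::ring_1) \<Rightarrow> ('a \<Rightarrow> complex) \<Rightarrow> ('a \<Rightarrow> complex) \<Rightarrow> 'i::linorder set \<Rightarrow> ('i \<Rightarrow> 'a set) \<Rightarrow> bool" where
  "cmono_indep e \<phi> \<psi> I A \<longleftrightarrow>
     (\<forall>i\<in>I. subalgebra e (A i) \<and> 1 \<notin> A i) \<and>
     mono_conditions I A \<phi> \<psi> \<and> mono_conditions I A \<psi> \<psi>"

definition cfree_indep ::
  "(complex \<Rightarrow> 'a::ring_1) \<Rightarrow> ('a \<Rightarrow> complex) \<Rightarrow> ('a \<Rightarrow> complex) \<Rightarrow> 'i set \<Rightarrow> ('i \<Rightarrow> 'a set) \<Rightarrow> bool" where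
  "cfree_indep e \<phi> \<psi> I A \<longleftrightarrow>
     (\<forall>i\<in>I. subalgebra e (A i)) \<and>
     (\<forall>ws. valid_word I A ws \<and> ws \<noteq> [] \<and>
           (\<forall>k. k + 1 < length ws \<longrightarrow> fst (ws ! k) \<noteq> fst (ws ! (k + 1))) \<and>
           (\<forall>w\<in>set ws. \<psi> (snd w) = 0) \<longrightarrow>
        \<psi> (wprod ws) = 0 \<and> \<phi> (wprod ws) = (\<Prod>w\<leftarrow>ws. \<phi> (snd w)))"

end

theory Submission
  imports Defs
begin


lemma calg_0: "complex_alg e \<Longrightarrow> e 0 = 0"
proof -
  assume "complex_alg e"
  then have "\<forall>a b. e (a+b) = e a + e b" unfolding complex_alg_def by blast
  then have "e (0+0) = e 0 + e 0" by blast
  then show ?thesis by simp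
qed

lemma calg_1: "complex_alg e \<Longrightarrow> e 1 = 1" unfolding complex_alg_def by blast
lemma calg_add: "complex_alg e \<Longrightarrow> e (a + b) = e a + e b" unfolding complex_alg_def by blast
lemma calg_mult: "complex_alg e \<Longrightarrow> e (a * b) = e a * e b" unfolding complex_alg_def by blast
lemma calg_central: "complex_alg e \<Longrightarrow> e a * x = x * e a" unfolding complex_alg_def by blast

lemma calg_neg: "complex_alg e \<Longrightarrow> e (- a) = - e a"
proof -
  assume h: "complex_alg e"
  then have "e (a + - a) = e a + e (- a)" by (rule calg_add)
  then have "e a + e (- a) = 0" using calg_0[OF h] by simp
  then show ?thesis by (metis add.inverse_unique)
qed

lemma calg_pull: "complex_alg e \<Longrightarrow> x * (e c * y) = e c * (x * y)"
proof -
  assume h: "complex_alg e"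
  have "x * (e c * y) = (x * e c) * y" by (simp add: mult.assoc)
  also have "\<dots> = (e c * x) * y" using calg_central[OF h, of c x] by simp
  finally show ?thesis by (simp add: mult.assoc)
qed

lemma uf_add: "unital_functional e f \<Longrightarrow> f (x + y) = f x + f y" by (simp add: unital_functional_def)
lemma uf_scal: "unital_functional e f \<Longrightarrow> f (e a * x) = a * f x" by (simp add: unital_functional_def)
lemma uf_1: "unital_functional e f \<Longrightarrow> f 1 = 1" by (simp add: unital_functional_def)
lemma uf_0: "unital_functional e f \<Longrightarrow> f 0 = 0"
proof -
  assume h: "unital_functional e f"
  have "f (0 + 0) = f 0 + f 0" by (rule uf_add[OF h])
  then show ?thesis by simp
qed
lemma uf_diff: "unital_functional e f \<Longrightarrow> f (x - y) = f x - f y"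
proof -
  assume h: "unital_functional e f"
  have "f ((x - y) + y) = f (x - y) + f y" by (rule uf_add[OF h])
  then show ?thesis by simp
qed

lemma uf_sum: "unital_functional e f \<Longrightarrow> f (\<Sum>i\<in>S. e (c i) * Z i) = (\<Sum>i\<in>S. c i * f (Z i))"
proof (induction S rule: infinite_finite_induct)
  case (infinite A) then show ?case by (simp add: uf_0)
next
  case empty then show ?case by (simp add: uf_0)
next
  case (insert x F) then show ?case by (simp add: uf_add uf_scal)
qed

lemma peval_ext:
  assumes "complex_alg e" "degree p < N"
  shows "peval e p Z = (\<Sum>i<N. e (coeff p i) * Z ^ i)"
proof -
  have "(\<Sum>i<N. e (coeff p i) * Z ^ i) = (\<Sum>i\<le>degree p. e (coeff p i) * Z ^ i)"
    by (rule sum.mono_neutral_right) (use assms in \<open>auto simp: coeff_eq_0 calg_0\<close>)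
  then show ?thesis by (simp add: peval_def)
qed

lemma peval_add: fixes p q :: "complex poly" assumes "complex_alg e" shows "peval e (p + q) Z = peval e p Z + peval e q Z"
proof -
  define N where "N = Suc (max (degree p) (degree q))"
  have d: "degree p < N" "degree q < N" "degree (p + q) < N"
    using degree_add_le_max[of p q] by (auto simp: N_def)
  show ?thesis using d
    by (simp add: peval_ext[OF assms] calg_add[OF assms] distrib_right sum.distrib)
qed

lemma peval_smult: assumes "complex_alg e" shows "peval e (smult c p) Z = e c * peval e p Z"
proof -
  define N where "N = Suc (degree p)"
  have d: "degree p < N" "degree (smult c p) < N"
    using degree_smult_le[of c p] by (auto simp: N_def)
  show ?thesis using d
    by (simp add: peval_ext[OF assms] calg_mult[OF assms] sum_distrib_left mult.assoc)
qed

lemma peval_pCons0: assumes "complex_alg e" shows "peval e (pCons 0 p) Z = Z * peval e p Z"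
proof -
  define N where "N = Suc (degree p)"
  have d: "degree p < N" "degree (pCons 0 p) < Suc N"
    by (auto simp: N_def degree_pCons_le le_imp_less_Suc)
  have "peval e (pCons 0 p) Z = (\<Sum>i<Suc N. e (coeff (pCons 0 p) i) * Z ^ i)"
    using d by (simp add: peval_ext[OF assms])
  also have "\<dots> = (\<Sum>i<N. e (coeff p i) * Z ^ Suc i)"
    unfolding sum.lessThan_Suc_shift by (simp add: calg_0[OF assms])
  also have "\<dots> = (\<Sum>i<N. Z * (e (coeff p i) * Z ^ i))"
    by (rule sum.cong) (auto simp: power_Suc calg_pull[OF assms])
  also have "\<dots> = Z * peval e p Z"
    using d by (simp add: peval_ext[OF assms] sum_distrib_left)
  finally show ?thesis .
qed

lemma peval_monom1: assumes "complex_alg e" shows "peval e (monom 1 q) Z = Z ^ q"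
proof -
  have "peval e (monom 1 q) Z = (\<Sum>i\<le>q. e (if q = i then 1 else 0) * Z ^ i)"
    by (simp add: peval_def degree_monom_eq coeff_monom)
  also have "\<dots> = (\<Sum>i\<le>q. if i = q then Z ^ q else 0)"
    by (rule sum.cong) (auto simp: calg_0[OF assms] calg_1[OF assms])
  finally show ?thesis by simp
qed

lemma peval_xm1: assumes "complex_alg e" shows "peval e ([:-1, 1:] ^ p) Z = (Z - 1) ^ p"
proof (induction p)
  case 0
  then show ?case using peval_monom1[OF assms, of 0 Z] by (simp add: monom_0 one_pCons)
next
  case (Suc p)
  have eq: "[:-1, 1:] ^ Suc p = smult (-1) ([:-1, 1:] ^ p) + pCons 0 ([:-1, 1:] ^ p)"
    by (simp add: mult_pCons_left)
  have "peval e ([:-1, 1:] ^ Suc p) Z = e (-1) * peval e ([:-1, 1:] ^ p) Z + Z * peval e ([:-1, 1:] ^ p) Z"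
    by (simp only: eq peval_add[OF assms] peval_smult[OF assms] peval_pCons0[OF assms])
  then show ?case using Suc
    by (simp add: calg_neg[OF assms] calg_1[OF assms] algebra_simps)
qed



definition Pw :: "'a::monoid_mult \<Rightarrow> 'a \<Rightarrow> bool list \<Rightarrow> 'a" where
  "Pw a y w = prod_list (map (\<lambda>b. if b then a else y) w)"

lemma Pw_Nil[simp]: "Pw a y [] = 1" by (simp add: Pw_def)
lemma Pw_append: "Pw a y (u @ v) = Pw a y u * Pw a y v" by (simp add: Pw_def)
lemma Pw_T[simp]: "Pw a y (replicate n True) = a ^ n" by (simp add: Pw_def prod_list_replicate)
lemma Pw_F[simp]: "Pw a y (replicate n False) = y ^ n" by (simp add: Pw_def prod_list_replicate)
lemma Pw_snoc: "Pw a y (w @ [b]) = Pw a y w * (if b then a else y)" by (simp add: Pw_def)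

fun altw :: "('i \<times> 'b) list \<Rightarrow> bool" where
  "altw [] = True"
| "altw [x] = True"
| "altw (x # y # r) = (fst x \<noteq> fst y \<and> altw (y # r))"

lemma altw_nth: "altw ws \<Longrightarrow> k + 1 < length ws \<Longrightarrow> fst (ws ! k) \<noteq> fst (ws ! (k + 1))"
proof (induction ws arbitrary: k rule: altw.induct)
  case (3 x y r)
  then show ?case by (cases k) auto
qed auto

lemma altw_append: "altw (u @ v) \<longleftrightarrow> altw u \<and> altw v \<and> (u \<noteq> [] \<longrightarrow> v \<noteq> [] \<longrightarrow> fst (last u) \<noteq> fst (hd v))"
proof (induction u rule: altw.induct)
  case 1 then show ?case by simp
next
  case (2 x) then show ?case by (cases v) auto
next
  case (3 x y r) then show ?case by auto
qed

lemma wprod_append: "wprod (u @ v) = wprod u * wprod v" by (simp add: wprod_def)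
lemma wprod_Nil[simp]: "wprod [] = 1" by (simp add: wprod_def)
lemma wprod_Cons[simp]: "wprod (x # u) = snd x * wprod u" by (simp add: wprod_def)

lemma decomp: "\<exists>p q R'. R = replicate p True @ replicate q False @ R' \<and> (R' = [] \<or> hd R') \<and> (q = 0 \<longrightarrow> R' = [])"
proof (induction R)
  case Nil then show ?case by (rule exI[of _ 0], rule exI[of _ 0]) auto
next
  case (Cons b R)
  then obtain p q R' where R: "R = replicate p True @ replicate q False @ R'"
    and h: "R' = [] \<or> hd R'" "q = 0 \<longrightarrow> R' = []" by blast
  show ?case
  proof (cases b)
    case True
    then show ?thesis using R h by (intro exI[of _ "Suc p"] exI[of _ q] exI[of _ R']) auto
  next
    case False
    show ?thesis
    proof (cases p)
      case 0
      then show ?thesis using R h False by (intro exI[of _ 0] exI[of _ "Suc q"] exI[of _ R']) auto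
    next
      case (Suc p')
      then show ?thesis using R h False by (intro exI[of _ 0] exI[of _ 1] exI[of _ R]) auto
    qed
  qed
qed

lemma rec_unique:
  fixes F G :: "bool list \<Rightarrow> complex" and m s :: "nat \<Rightarrow> complex"
  assumes T: "\<And>p. F (replicate p True) = G (replicate p True)"
    and Fa: "\<And>q. F (replicate q False) = G (replicate q False)"
    and F3: "\<And>q R. q \<ge> 1 \<Longrightarrow> R \<noteq> [] \<Longrightarrow> hd R \<Longrightarrow> F (replicate q False @ R) = m q * F R"
    and G3: "\<And>q R. q \<ge> 1 \<Longrightarrow> R \<noteq> [] \<Longrightarrow> hd R \<Longrightarrow> G (replicate q False @ R) = m q * G R"
    and F4: "\<And>p q. p \<ge> 1 \<Longrightarrow> q \<ge> 1 \<Longrightarrow> F (replicate p True @ replicate q False) = F (replicate p True) * m q"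
    and G4: "\<And>p q. p \<ge> 1 \<Longrightarrow> q \<ge> 1 \<Longrightarrow> G (replicate p True @ replicate q False) = G (replicate p True) * m q"
    and F5: "\<And>p q R. p \<ge> 1 \<Longrightarrow> q \<ge> 1 \<Longrightarrow> R \<noteq> [] \<Longrightarrow> hd R \<Longrightarrow>
       F (replicate p True @ replicate q False @ R) = (m q - s q) * F (replicate p True) * F R + s q * F (replicate p True @ R)"
    and G5: "\<And>p q R. p \<ge> 1 \<Longrightarrow> q \<ge> 1 \<Longrightarrow> R \<noteq> [] \<Longrightarrow> hd R \<Longrightarrow>
       G (replicate p True @ replicate q False @ R) = (m q - s q) * G (replicate p True) * G R + s q * G (replicate p True @ R)"
  shows "F R = G R"
proof (induction "length R" arbitrary: R rule: less_induct)
  case less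
  obtain p q R' where R: "R = replicate p True @ replicate q False @ R'"
    and h: "R' = [] \<or> hd R'" "q = 0 \<longrightarrow> R' = []" using decomp by blast
  show ?case
  proof (cases "q = 0")
    case True
    then show ?thesis using R h T by simp
  next
    case False
    then have q1: "q \<ge> 1" by simp
    show ?thesis
    proof (cases "p = 0")
      case True
      show ?thesis
      proof (cases "R' = []")
        case True
        then show ?thesis using R \<open>p = 0\<close> Fa by simp
      next
        case False
        then have "hd R'" using h by simp
        have "length R' < length R" using R q1 by simp
        then have "F R' = G R'" by (rule less)
        then show ?thesis using R \<open>p = 0\<close> F3[OF q1 False \<open>hd R'\<close>] G3[OF q1 False \<open>hd R'\<close>] by simp
      qed
    next
      case False
      then have p1: "p \<ge> 1" by simp
      show ?thesis
      proof (cases "R' = []")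
        case True
        then show ?thesis using R F4[OF p1 q1] G4[OF p1 q1] T by simp
      next
        case False
        then have "hd R'" using h by simp
        have "length R' < length R" using R p1 by simp
        then have i1: "F R' = G R'" by (rule less)
        have "length (replicate p True @ R') < length R" using R q1 by simp
        then have i2: "F (replicate p True @ R') = G (replicate p True @ R')" by (rule less)
        show ?thesis using R F5[OF p1 q1 False \<open>hd R'\<close>] G5[OF p1 q1 False \<open>hd R'\<close>] T i1 i2 by simp
      qed
    qed
  qed
qed



lemma wprod_map_lt: "wprod (map (\<lambda>b. if b then (1::nat, a) else (2, y)) R) = Pw a y R"
  by (induction R) (auto simp: Pw_def)

lemma wprod_rep: "wprod (replicate p x) = snd x ^ p"
  by (induction p) auto

lemma ngen_pow: "complex_alg e \<Longrightarrow> q \<ge> 1 \<Longrightarrow> Z ^ q \<in> ngen e Z"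
  unfolding ngen_def by (rule CollectI, rule exI[of _ "monom 1 q"]) (simp add: peval_monom1 coeff_monom)

lemma ngen_self: "complex_alg e \<Longrightarrow> Z \<in> ngen e Z"
  using ngen_pow[of e 1 Z] by simp

context
  fixes e :: "complex \<Rightarrow> 'a::ring_1" and \<phi> \<psi> :: "'a \<Rightarrow> complex" and X Y :: 'a
  assumes aps: "alg_prob_space e \<phi> \<psi>"
    and ci: "cmono_indep e \<phi> \<psi> {1::nat, 2} (\<lambda>i. if i = 1 then ngen e (X - 1) else ngen e Y)"
begin

lemma ca: "complex_alg e" using aps by (simp add: alg_prob_space_def)

lemma mono_use:
  assumes "valid_word {1::nat,2} (\<lambda>i. if i = 1 then ngen e (X - 1) else ngen e Y) ws" "ws \<noteq> []"
  shows "let n = length ws in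
       (2 \<le> n \<and> fst (ws ! 0) > fst (ws ! 1) \<longrightarrow>
          \<phi> (wprod ws) = \<phi> (snd (ws ! 0)) * \<phi> (wprod (tl ws))) \<and>
       (2 \<le> n \<and> fst (ws ! (n - 1)) > fst (ws ! (n - 2)) \<longrightarrow>
          \<phi> (wprod ws) = \<phi> (wprod (butlast ws)) * \<phi> (snd (ws ! (n - 1)))) \<and>
       (\<forall>j. 1 \<le> j \<and> j + 1 < n \<and> fst (ws ! (j - 1)) < fst (ws ! j) \<and> fst (ws ! j) > fst (ws ! (j + 1)) \<longrightarrow>
          \<phi> (wprod ws) =
            (\<phi> (snd (ws ! j)) - \<psi> (snd (ws ! j))) * \<phi> (wprod (take j ws)) * \<phi> (wprod (drop (j + 1) ws))
            + \<psi> (snd (ws ! j)) * \<phi> (wprod (take j ws @ drop (j + 1) ws)))"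
  using ci assms unfolding cmono_indep_def mono_conditions_def by blast

lemma valid_lt: "valid_word {1::nat,2} (\<lambda>i. if i = 1 then ngen e (X - 1) else ngen e Y)
    (map (\<lambda>b. if b then (1::nat, X - 1) else (2, Y)) R)"
  by (auto simp: valid_word_def ngen_self[OF ca])

lemma M3:
  assumes q1: "q \<ge> 1" and R: "R \<noteq> []" "hd R"
  shows "\<phi> (Pw (X - 1) Y (replicate q False @ R)) = \<phi> (Y ^ q) * \<phi> (Pw (X - 1) Y R)"
proof -
  obtain R0 where R0: "R = True # R0" using R by (cases R) auto
  define ws where "ws = (2::nat, Y ^ q) # map (\<lambda>b. if b then (1::nat, X - 1) else (2, Y)) R"
  have v: "valid_word {1::nat,2} (\<lambda>i. if i = 1 then ngen e (X - 1) else ngen e Y) ws"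
    using valid_lt[of R] ngen_pow[OF ca q1, of Y] by (simp add: ws_def valid_word_def)
  have ne: "ws \<noteq> []" by (simp add: ws_def)
  have "\<phi> (wprod ws) = \<phi> (snd (ws ! 0)) * \<phi> (wprod (tl ws))"
    using mono_use[OF v ne] by (simp add: ws_def Let_def R0)
  then show ?thesis
    by (simp add: ws_def wprod_map_lt Pw_append)
qed

lemma M4:
  assumes p1: "p \<ge> 1" and q1: "q \<ge> 1"
  shows "\<phi> (Pw (X - 1) Y (replicate p True @ replicate q False)) = \<phi> ((X - 1) ^ p) * \<phi> (Y ^ q)"
proof -
  define ws where "ws = replicate p (1::nat, X - 1) @ [(2, Y ^ q)]"
  have v: "valid_word {1::nat,2} (\<lambda>i. if i = 1 then ngen e (X - 1) else ngen e Y) ws"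
    using ngen_pow[OF ca q1, of Y] ngen_self[OF ca, of "X - 1"] by (auto simp: ws_def valid_word_def)
  have n: "length ws = p + 1" by (simp add: ws_def)
  have a: "ws ! (length ws - 1) = (2, Y ^ q)" by (simp add: ws_def nth_append)
  have b: "ws ! (length ws - 2) = (1, X - 1)" using p1 by (simp add: ws_def nth_append)
  have ne: "ws \<noteq> []" by (simp add: ws_def)
  have "\<phi> (wprod ws) = \<phi> (wprod (butlast ws)) * \<phi> (snd (ws ! (length ws - 1)))"
    using mono_use[OF v ne] p1 a b n by (auto simp: Let_def ws_def)
  then show ?thesis
    by (simp add: ws_def wprod_append wprod_rep Pw_append nth_append)
qed

lemma M5:
  assumes p1: "p \<ge> 1" and q1: "q \<ge> 1" and R: "R \<noteq> []" "hd R"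
  shows "\<phi> (Pw (X - 1) Y (replicate p True @ replicate q False @ R)) =
     (\<phi> (Y ^ q) - \<psi> (Y ^ q)) * \<phi> ((X - 1) ^ p) * \<phi> (Pw (X - 1) Y R)
     + \<psi> (Y ^ q) * \<phi> (Pw (X - 1) Y (replicate p True @ R))"
proof -
  obtain R0 where R0: "R = True # R0" using R by (cases R) auto
  define L where "L = map (\<lambda>b. if b then (1::nat, X - 1) else (2, Y)) R"
  define ws where "ws = replicate p (1::nat, X - 1) @ (2, Y ^ q) # L"
  have v: "valid_word {1::nat,2} (\<lambda>i. if i = 1 then ngen e (X - 1) else ngen e Y) ws"
    using valid_lt[of R] ngen_pow[OF ca q1, of Y] ngen_self[OF ca, of "X - 1"]
    by (auto simp: ws_def valid_word_def L_def)
  have a: "ws ! (p - 1) = (1, X - 1)" using p1 by (simp add: ws_def nth_append)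
  have b: "ws ! p = (2, Y ^ q)" by (simp add: ws_def nth_append)
  have c: "ws ! (p + 1) = (1, X - 1)" by (simp add: ws_def nth_append L_def R0)
  have l: "p + 1 < length ws" by (simp add: ws_def L_def R0)
  have t: "take p ws = replicate p (1, X - 1)" by (simp add: ws_def)
  have d: "drop (p + 1) ws = L" by (simp add: ws_def)
  have ne: "ws \<noteq> []" by (simp add: ws_def)
  have "\<phi> (wprod ws) =
            (\<phi> (snd (ws ! p)) - \<psi> (snd (ws ! p))) * \<phi> (wprod (take p ws)) * \<phi> (wprod (drop (p + 1) ws))
            + \<psi> (snd (ws ! p)) * \<phi> (wprod (take p ws @ drop (p + 1) ws))"
    using mono_use[OF v ne] p1 a b c l unfolding Let_def by auto
  then have "\<phi> (wprod ws) =
            (\<phi> (Y ^ q) - \<psi> (Y ^ q)) * \<phi> (wprod (replicate p (1::nat, X - 1))) * \<phi> (wprod L)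
            + \<psi> (Y ^ q) * \<phi> (wprod (replicate p (1::nat, X - 1) @ L))"
    by (simp only: b t d snd_conv)
  then show ?thesis
    by (simp add: ws_def L_def wprod_append wprod_rep wprod_map_lt Pw_append)
qed

end



definition goodu :: "('b \<Rightarrow> complex) \<Rightarrow> (nat \<Rightarrow> 'b set) \<Rightarrow> (nat \<times> 'b) list \<Rightarrow> bool" where
  "goodu \<psi> Al u \<longleftrightarrow> u = [] \<or> (valid_word {1::nat,2} Al u \<and> altw u \<and> (\<forall>w\<in>set u. \<psi> (snd w) = 0) \<and> fst (last u) = 2)"

lemma ugen_pow: "complex_alg e \<Longrightarrow> Z ^ q \<in> ugen e Z"
  unfolding ugen_def by (rule CollectI, rule exI[of _ "monom 1 q"]) (simp add: peval_monom1)

lemma ugen_xm1: "complex_alg e \<Longrightarrow> (Z - 1) ^ q \<in> ugen e Z"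
  unfolding ugen_def by (rule CollectI, rule exI[of _ "[:-1, 1:] ^ q"]) (simp add: peval_xm1)

context
  fixes e' :: "complex \<Rightarrow> 'b::ring_1" and \<phi>' \<psi>' :: "'b \<Rightarrow> complex" and X' Y' :: 'b
  assumes aps': "alg_prob_space e' \<phi>' \<psi>'"
    and cf: "cfree_indep e' \<phi>' \<psi>' {1::nat, 2} (\<lambda>i. if i = 1 then ugen e' X' else ugen e' Y')"
    and lx: "law e' \<psi>' X' = delta1"
begin

lemma ca': "complex_alg e'" using aps' by (simp add: alg_prob_space_def)
lemma uf': "unital_functional e' \<phi>'" using aps' by (simp add: alg_prob_space_def)
lemma ug': "unital_functional e' \<psi>'" using aps' by (simp add: alg_prob_space_def)

lemma subY: "subalgebra e' (ugen e' Y')" using cf by (simp add: cfree_indep_def)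

lemma ugen_D: "Y' ^ q - e' c \<in> ugen e' Y'"
proof -
  have 1: "Y' ^ q \<in> ugen e' Y'" "Y' ^ 0 \<in> ugen e' Y'" using ugen_pow[OF ca'] by blast+
  have cl: "\<forall>a. \<forall>x\<in>ugen e' Y'. e' a * x \<in> ugen e' Y'"
    "\<forall>x\<in>ugen e' Y'. \<forall>y\<in>ugen e' Y'. x + y \<in> ugen e' Y' \<and> x * y \<in> ugen e' Y'"
    using subY unfolding subalgebra_def by blast+
  have "e' (- c) * Y' ^ 0 \<in> ugen e' Y'" using 1(2) cl(1) by blast
  then have "Y' ^ q + e' (- c) * Y' ^ 0 \<in> ugen e' Y'" using 1(1) cl(2) by blast
  then show ?thesis by (simp add: calg_neg[OF ca'])
qed

lemma psiA: "p \<ge> 1 \<Longrightarrow> \<psi>' ((X' - 1) ^ p) = 0"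
proof -
  assume p: "p \<ge> 1"
  have "\<psi>' (peval e' ([:-1, 1:] ^ p) X') = delta1 ([:-1, 1:] ^ p)"
    using fun_cong[OF lx, of "[:-1, 1:] ^ p"] by (simp add: law_def)
  then show ?thesis using p by (simp add: peval_xm1[OF ca'] delta1_def poly_power)
qed

lemma scal1: "unital_functional e' f \<Longrightarrow> f (e' c) = c"
  using uf_scal[of e' f c 1] uf_1[of e' f] by simp

lemma psiD: "\<psi>' (Y' ^ q - e' (\<psi>' (Y' ^ q))) = 0"
  by (simp add: uf_diff[OF ug'] scal1[OF ug'])

lemma phiD: "\<phi>' (Y' ^ q - e' c) = \<phi>' (Y' ^ q) - c"
  by (simp add: uf_diff[OF uf'] scal1[OF uf'])

lemma cf_prod:
  assumes "valid_word {1::nat,2} (\<lambda>i. if i = 1 then ugen e' X' else ugen e' Y') ws" "ws \<noteq> []" "altw ws"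
    "\<forall>w\<in>set ws. \<psi>' (snd w) = 0"
  shows "\<phi>' (wprod ws) = (\<Prod>w\<leftarrow>ws. \<phi>' (snd w))"
  using cf assms altw_nth[OF assms(3)] unfolding cfree_indep_def by blast

lemma good_prod:
  assumes "goodu \<psi>' (\<lambda>i. if i = 1 then ugen e' X' else ugen e' Y') u"
  shows "\<phi>' (wprod u) = (\<Prod>w\<leftarrow>u. \<phi>' (snd w))"
proof (cases "u = []")
  case True then show ?thesis using uf_1[OF uf'] by simp
next
  case False then show ?thesis using assms cf_prod[of u] by (auto simp: goodu_def)
qed

lemma app2:
  assumes g: "goodu \<psi>' (\<lambda>i. if i = 1 then ugen e' X' else ugen e' Y') u"
    and a: "a \<in> ugen e' X'" "\<psi>' a = 0" and b: "b \<in> ugen e' Y'" "\<psi>' b = 0"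
  shows "goodu \<psi>' (\<lambda>i. if i = 1 then ugen e' X' else ugen e' Y') (u @ [(1, a), (2, b)])"
    "\<phi>' (wprod (u @ [(1, a), (2, b)])) = \<phi>' (wprod u) * \<phi>' a * \<phi>' b"
proof -
  have h: "valid_word {1::nat,2} (\<lambda>i. if i = 1 then ugen e' X' else ugen e' Y') (u @ [(1, a), (2, b)])
     \<and> altw (u @ [(1, a), (2, b)]) \<and> (\<forall>w\<in>set (u @ [(1, a), (2, b)]). \<psi>' (snd w) = 0)"
    using g a b by (auto simp: goodu_def valid_word_def altw_append)
  then show "goodu \<psi>' (\<lambda>i. if i = 1 then ugen e' X' else ugen e' Y') (u @ [(1, a), (2, b)])"
    by (simp add: goodu_def)
  show "\<phi>' (wprod (u @ [(1, a), (2, b)])) = \<phi>' (wprod u) * \<phi>' a * \<phi>' b"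
    using cf_prod[of "u @ [(1, a), (2, b)]"] h good_prod[OF g] by (simp add: mult.assoc)
qed

lemma app1:
  assumes g: "goodu \<psi>' (\<lambda>i. if i = 1 then ugen e' X' else ugen e' Y') u"
    and a: "a \<in> ugen e' X'" "\<psi>' a = 0"
  shows "\<phi>' (wprod (u @ [(1, a)])) = \<phi>' (wprod u) * \<phi>' a"
proof -
  have h: "valid_word {1::nat,2} (\<lambda>i. if i = 1 then ugen e' X' else ugen e' Y') (u @ [(1, a)])
     \<and> altw (u @ [(1, a)]) \<and> (\<forall>w\<in>set (u @ [(1, a)]). \<psi>' (snd w) = 0)"
    using g a by (auto simp: goodu_def valid_word_def altw_append)
  show ?thesis
    using cf_prod[of "u @ [(1, a)]"] h good_prod[OF g] by simp
qed

lemma stepE: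
  assumes p1: "p \<ge> 1"
    and IH1: "\<forall>u. goodu \<psi>' (\<lambda>i. if i = 1 then ugen e' X' else ugen e' Y') u \<longrightarrow>
       \<phi>' (wprod u * Pw (X' - 1) Y' R) = \<phi>' (wprod u) * \<phi>' (Pw (X' - 1) Y' R)"
    and IH2: "\<forall>u. goodu \<psi>' (\<lambda>i. if i = 1 then ugen e' X' else ugen e' Y') u \<longrightarrow>
       \<phi>' (wprod u * Pw (X' - 1) Y' (replicate p True @ R)) = \<phi>' (wprod u) * \<phi>' (Pw (X' - 1) Y' (replicate p True @ R))"
    and g: "goodu \<psi>' (\<lambda>i. if i = 1 then ugen e' X' else ugen e' Y') u"
  shows "\<phi>' (wprod u * Pw (X' - 1) Y' (replicate p True @ replicate q False @ R)) =
    \<phi>' (wprod u) * ((\<phi>' (Y' ^ q) - \<psi>' (Y' ^ q)) * \<phi>' ((X' - 1) ^ p) * \<phi>' (Pw (X' - 1) Y' R)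
       + \<psi>' (Y' ^ q) * \<phi>' (Pw (X' - 1) Y' (replicate p True @ R)))"
proof -
  define s where "s = \<psi>' (Y' ^ q)"
  define D where "D = Y' ^ q - e' s"
  define W where "W = wprod u"
  define P where "P = Pw (X' - 1) Y' R"
  define A where "A = (X' - 1) ^ p"
  have Yq: "Y' ^ q = D + e' s" by (simp add: D_def)
  have "W * Pw (X' - 1) Y' (replicate p True @ replicate q False @ R) = W * (A * ((D + e' s) * P))"
    by (simp add: Pw_append P_def A_def Yq[symmetric])
  also have "\<dots> = W * (A * (D * P)) + W * (A * (e' s * P))"
    by (simp add: distrib_left distrib_right)
  also have "\<dots> = wprod (u @ [(1, A), (2, D)]) * P + e' s * (W * Pw (X' - 1) Y' (replicate p True @ R))"
    by (simp add: calg_pull[OF ca'] W_def wprod_append Pw_append P_def A_def mult.assoc)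
  finally have eq: "W * Pw (X' - 1) Y' (replicate p True @ replicate q False @ R) =
     wprod (u @ [(1, A), (2, D)]) * P + e' s * (W * Pw (X' - 1) Y' (replicate p True @ R))" .
  have aA: "A \<in> ugen e' X'" "\<psi>' A = 0" using ugen_xm1[OF ca'] psiA[OF p1] by (auto simp: A_def)
  have bD: "D \<in> ugen e' Y'" "\<psi>' D = 0" using ugen_D psiD by (auto simp: D_def s_def)
  have "\<phi>' (W * Pw (X' - 1) Y' (replicate p True @ replicate q False @ R)) =
      \<phi>' (wprod (u @ [(1, A), (2, D)]) * P) + s * \<phi>' (W * Pw (X' - 1) Y' (replicate p True @ R))"
    by (simp add: eq uf_add[OF uf'] uf_scal[OF uf'])
  also have "\<dots> = \<phi>' W * \<phi>' A * \<phi>' D * \<phi>' P + s * (\<phi>' W * \<phi>' (Pw (X' - 1) Y' (replicate p True @ R)))"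
    using IH1[rule_format, OF app2(1)[OF g aA bD]] app2(2)[OF g aA bD] IH2[rule_format, OF g] by (simp add: P_def W_def)
  finally show ?thesis
    by (simp add: W_def D_def phiD s_def A_def P_def algebra_simps)
qed

lemma Gfac:
  "R = [] \<or> hd R \<Longrightarrow> goodu \<psi>' (\<lambda>i. if i = 1 then ugen e' X' else ugen e' Y') u \<Longrightarrow>
     \<phi>' (wprod u * Pw (X' - 1) Y' R) = \<phi>' (wprod u) * \<phi>' (Pw (X' - 1) Y' R)"
proof (induction "length R" arbitrary: R u rule: less_induct)
  case less
  obtain p q R' where R: "R = replicate p True @ replicate q False @ R'"
    and h: "R' = [] \<or> hd R'" "q = 0 \<longrightarrow> R' = []" using decomp by blast
  show ?case
  proof (cases "R = []")
    case True then show ?thesis by (simp add: uf_1[OF uf'])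
  next
    case False
    then have hR: "hd R" using less.prems by simp
    have p1: "p \<ge> 1"
    proof (rule ccontr)
      assume "\<not> p \<ge> 1"
      then have "p = 0" by simp
      then show False using R h hR False by (cases q) auto
    qed
    show ?thesis
    proof (cases "q = 0")
      case True
      then have "R = replicate p True" using R h by simp
      then show ?thesis
        using app1[OF less.prems(2) ugen_xm1[OF ca'] psiA[OF p1]] uf_1[OF uf']
        by (simp add: wprod_append)
    next
      case False
      have IH1: "\<forall>u. goodu \<psi>' (\<lambda>i. if i = 1 then ugen e' X' else ugen e' Y') u \<longrightarrow>
       \<phi>' (wprod u * Pw (X' - 1) Y' R') = \<phi>' (wprod u) * \<phi>' (Pw (X' - 1) Y' R')"
        by (intro allI impI, rule less.hyps) (use R p1 h in auto)
      have IH2: "\<forall>u. goodu \<psi>' (\<lambda>i. if i = 1 then ugen e' X' else ugen e' Y') u \<longrightarrow>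
       \<phi>' (wprod u * Pw (X' - 1) Y' (replicate p True @ R')) = \<phi>' (wprod u) * \<phi>' (Pw (X' - 1) Y' (replicate p True @ R'))"
        by (intro allI impI, rule less.hyps) (use R p1 False in auto)
      have g0: "goodu \<psi>' (\<lambda>i. if i = 1 then ugen e' X' else ugen e' Y') []" by (simp add: goodu_def)
      note k = stepE[OF p1 IH1 IH2]
      show ?thesis using k[OF less.prems(2), of q] k[OF g0, of q] R uf_1[OF uf'] by simp
    qed
  qed
qed

lemma CF3:
  assumes q1: "q \<ge> 1" and R: "R \<noteq> []" "hd R"
  shows "\<phi>' (Pw (X' - 1) Y' (replicate q False @ R)) = \<phi>' (Y' ^ q) * \<phi>' (Pw (X' - 1) Y' R)"
proof -
  define s where "s = \<psi>' (Y' ^ q)"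
  define D where "D = Y' ^ q - e' s"
  define P where "P = Pw (X' - 1) Y' R"
  have bD: "D \<in> ugen e' Y'" "\<psi>' D = 0" using ugen_D psiD by (auto simp: D_def s_def)
  have g: "goodu \<psi>' (\<lambda>i. if i = 1 then ugen e' X' else ugen e' Y') [(2, D)]"
    using bD by (simp add: goodu_def valid_word_def)
  have "Pw (X' - 1) Y' (replicate q False @ R) = wprod [(2, D)] * P + e' s * P"
    by (simp add: Pw_append P_def D_def algebra_simps)
  then have "\<phi>' (Pw (X' - 1) Y' (replicate q False @ R)) = \<phi>' (wprod [(2, D)]) * \<phi>' P + s * \<phi>' P"
    using Gfac[OF _ g, of R] R by (simp add: uf_add[OF uf'] uf_scal[OF uf'] P_def)
  then show ?thesis by (simp add: D_def phiD s_def P_def algebra_simps)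
qed

lemma CF5:
  assumes p1: "p \<ge> 1" and R: "R = [] \<or> hd R"
  shows "\<phi>' (Pw (X' - 1) Y' (replicate p True @ replicate q False @ R)) =
    (\<phi>' (Y' ^ q) - \<psi>' (Y' ^ q)) * \<phi>' ((X' - 1) ^ p) * \<phi>' (Pw (X' - 1) Y' R)
       + \<psi>' (Y' ^ q) * \<phi>' (Pw (X' - 1) Y' (replicate p True @ R))"
proof -
  have g0: "goodu \<psi>' (\<lambda>i. if i = 1 then ugen e' X' else ugen e' Y') []" by (simp add: goodu_def)
  have R2: "replicate p True @ R = [] \<or> hd (replicate p True @ R)" using p1 by (cases p) auto
  show ?thesis
    using stepE[OF p1 _ _ g0, of R q] Gfac[OF R] Gfac[OF R2] uf_1[OF uf'] by simp
qed

lemma CF4: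
  assumes p1: "p \<ge> 1"
  shows "\<phi>' (Pw (X' - 1) Y' (replicate p True @ replicate q False)) = \<phi>' ((X' - 1) ^ p) * \<phi>' (Y' ^ q)"
  using CF5[OF p1, of "[]" q] uf_1[OF uf'] by (simp add: algebra_simps)

end



theorem proposition3p2:
  fixes e :: "complex \<Rightarrow> 'a::ring_1" and \<phi> \<psi> :: "'a \<Rightarrow> complex" and X Y :: 'a
    and e' :: "complex \<Rightarrow> 'b::ring_1" and \<phi>' \<psi>' :: "'b \<Rightarrow> complex" and X' Y' :: 'b
    and \<mu>1 \<mu>2 \<nu>2 :: "complex poly \<Rightarrow> complex"
  assumes "distribution \<mu>1" and "distribution \<mu>2" and "distribution \<nu>2"
    and "alg_prob_space e \<phi> \<psi>"
    and "cmono_indep e \<phi> \<psi> {1::nat, 2} (\<lambda>i. if i = 1 then ngen e (X - 1) else ngen e Y)"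
    and "law e \<phi> X = \<mu>1" and "law e \<phi> Y = \<mu>2" and "law e \<psi> Y = \<nu>2"
    and "alg_prob_space e' \<phi>' \<psi>'"
    and "cfree_indep e' \<phi>' \<psi>' {1::nat, 2} (\<lambda>i. if i = 1 then ugen e' X' else ugen e' Y')"
    and "law e' \<phi>' X' = \<mu>1" and "law e' \<psi>' X' = delta1"
    and "law e' \<phi>' Y' = \<mu>2" and "law e' \<psi>' Y' = \<nu>2"
  shows "law e \<phi> (X * Y) = law e' \<phi>' (X' * Y')"
proof -
  note aps = assms(4) and ci = assms(5) and aps' = assms(9) and cf = assms(10) and lx = assms(12)
  have ca: "complex_alg e" and uf: "unital_functional e \<phi>" using aps by (auto simp: alg_prob_space_def)
  have ca': "complex_alg e'" and uf': "unital_functional e' \<phi>'" using aps' by (auto simp: alg_prob_space_def)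
  have lawX: "\<And>r. \<phi> (peval e r X) = \<phi>' (peval e' r X')"
    using assms(6,11) unfolding law_def by metis
  have lawY: "\<And>r. \<phi> (peval e r Y) = \<phi>' (peval e' r Y')"
    using assms(7,13) unfolding law_def by metis
  have lawS: "\<And>r. \<psi> (peval e r Y) = \<psi>' (peval e' r Y')"
    using assms(8,14) unfolding law_def by metis
  have eA: "\<phi> ((X - 1) ^ p) = \<phi>' ((X' - 1) ^ p)" for p
    using lawX[of "[:-1, 1:] ^ p"] by (simp only: peval_xm1[OF ca] peval_xm1[OF ca'])
  have eY: "\<phi> (Y ^ q) = \<phi>' (Y' ^ q)" for q
    using lawY[of "monom 1 q"] by (simp only: peval_monom1[OF ca] peval_monom1[OF ca'])
  have eS: "\<psi> (Y ^ q) = \<psi>' (Y' ^ q)" for q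
    using lawS[of "monom 1 q"] by (simp only: peval_monom1[OF ca] peval_monom1[OF ca'])
  define F where "F = (\<lambda>R. \<phi> (Pw (X - 1) Y R))"
  define G where "G = (\<lambda>R. \<phi>' (Pw (X' - 1) Y' R))"
  define m where "m = (\<lambda>q. \<phi> (Y ^ q))"
  define s where "s = (\<lambda>q. \<psi> (Y ^ q))"
  have FG: "F R = G R" for R
  proof (rule rec_unique[of F G m s])
    show "F (replicate p True) = G (replicate p True)" for p by (simp add: F_def G_def eA)
    show "F (replicate q False) = G (replicate q False)" for q by (simp add: F_def G_def eY)
    show "F (replicate q False @ R) = m q * F R" if "q \<ge> 1" "R \<noteq> []" "hd R" for q R
      using M3[OF aps ci that] by (simp add: F_def m_def)
    show "G (replicate q False @ R) = m q * G R" if "q \<ge> 1" "R \<noteq> []" "hd R" for q R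
      using CF3[OF aps' cf lx that] by (simp add: G_def m_def eY)
    show "F (replicate p True @ replicate q False) = F (replicate p True) * m q" if "p \<ge> 1" "q \<ge> 1" for p q
      using M4[OF aps ci that] by (simp add: F_def m_def)
    show "G (replicate p True @ replicate q False) = G (replicate p True) * m q" if "p \<ge> 1" "q \<ge> 1" for p q
      using CF4[OF aps' cf lx that(1), of q] by (simp add: G_def m_def eY)
    show "F (replicate p True @ replicate q False @ R) = (m q - s q) * F (replicate p True) * F R + s q * F (replicate p True @ R)"
      if "p \<ge> 1" "q \<ge> 1" "R \<noteq> []" "hd R" for p q R
      using M5[OF aps ci that] by (simp add: F_def m_def s_def)
    show "G (replicate p True @ replicate q False @ R) = (m q - s q) * G (replicate p True) * G R + s q * G (replicate p True @ R)"
      if "p \<ge> 1" "q \<ge> 1" "R \<noteq> []" "hd R" for p q R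
      using CF5[OF aps' cf lx that(1), of R q] that by (simp add: G_def m_def s_def eY eS)
  qed
  have pw: "\<phi> (Pw (X - 1) Y w * (X * Y) ^ n) = \<phi>' (Pw (X' - 1) Y' w * (X' * Y') ^ n)" for n w
  proof (induction n arbitrary: w)
    case 0
    then show ?case using FG[of w] by (simp add: F_def G_def)
  next
    case (Suc n)
    have h1: "Pw A B (w @ [True, False]) = Pw A B w * (A * B)" for A B :: "'c::ring_1"
      by (simp add: Pw_append Pw_def)
    have h2: "Pw A B (w @ [False]) = Pw A B w * B" for A B :: "'c::ring_1"
      by (simp add: Pw_append Pw_def)
    have h3: "Pw (Z - 1) B w * (Z * B) ^ Suc n = Pw (Z - 1) B (w @ [True, False]) * (Z * B) ^ n
        + Pw (Z - 1) B (w @ [False]) * (Z * B) ^ n" for Z B :: "'c::ring_1"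
      unfolding h1 h2 by (simp add: algebra_simps)
    show ?case
      by (simp only: h3 uf_add[OF uf] uf_add[OF uf'] Suc)
  qed
  show ?thesis
  proof (rule ext)
    fix r
    have "law e \<phi> (X * Y) r = (\<Sum>i\<le>degree r. coeff r i * \<phi> ((X * Y) ^ i))"
      unfolding law_def peval_def by (rule uf_sum[OF uf])
    also have "\<dots> = (\<Sum>i\<le>degree r. coeff r i * \<phi>' ((X' * Y') ^ i))"
      using pw[of "[]"] by simp
    also have "\<dots> = law e' \<phi>' (X' * Y') r"
      unfolding law_def peval_def by (rule uf_sum[OF uf', symmetric])
    finally show "law e \<phi> (X * Y) r = law e' \<phi>' (X' * Y') r" .
  qed
qed

end
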